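(* Let $(U,V)$ be a pair of random variables taking values in finite sets $\mathcal{U}\times\mathcal{V}$ with joint probability mass function $p(u,v)$ and marginals $p(u),p(v)$. Let $\mathcal{U}_1,\dots,\mathcal{U}_{\tilde N_u}$ be a partition of $\mathcal{U}$ into nonempty pairwise disjoint blocks and $\mathcal{V}_1,\dots,\mathcal{V}_{\tilde N_v}$ a partition of $\mathcal{V}$ into nonempty pairwise disjoint blocks (the synonymous mappings), with associated semantic variables $\tilde U,\tilde V$. Then (chain rule of mutual information) $$I_s(\tilde U;\tilde V)\le H_s(\tilde V)-H(V\mid U)\le I(U;V)\le H(V)-H_s(\tilde V\mid U)\le I^s(\tilde U;\tilde V),$$ where $I(U;V)$ is the Shannon mutual information and $H(V)$, $H(V\mid U)$ are Shannon entropies.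
   Context: Write $p(\mathcal{U}_{i_s})=\sum_{u\in\mathcal{U}_{i_s}}p(u)$, $p(\mathcal{V}_{j_s})=\sum_{v\in\mathcal{V}_{j_s}}p(v)$, $p(\mathcal{U}_{i_s}\times\mathcal{V}_{j_s})=\sum_{(u,v)\in\mathcal{U}_{i_s}\times\mathcal{V}_{j_s}}p(u,v)$. Semantic entropies: $H_s(\tilde U)=-\sum_{i_s}p(\mathcal{U}_{i_s})\log p(\mathcal{U}_{i_s})$, $H_s(\tilde V)=-\sum_{j_s}p(\mathcal{V}_{j_s})\log p(\mathcal{V}_{j_s})$, $H_s(\tilde U,\tilde V)=-\sum_{i_s,j_s}p(\mathcal{U}_{i_s}\times\mathcal{V}_{j_s})\log p(\mathcal{U}_{i_s}\times\mathcal{V}_{j_s})$. Semantic conditional entropy: $H_s(\tilde V\mid U)=-\sum_{u:p(u)>0}\sum_{j_s}p(u)\,p(\mathcal{V}_{j_s}\mid u)\log p(\mathcal{V}_{j_s}\mid u)$ with $p(\mathcal{V}_{j_s}\mid u)=\sum_{v\in\mathcal{V}_{j_s}}p(v\mid u)$. Up semantic mutual information: $I^s(\tilde U;\tilde V)=H(U)+H(V)-H_s(\tilde U,\tilde V)$. Down semantic mutual information: $I_s(\tilde U;\tilde V)=H_s(\tilde U)+H_s(\tilde V)-H(U,V)$ (which may be negative). Logarithms are to base 2 and $0\log 0=0$. *)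

theory Defs
  imports "HOL-Analysis.Analysis" "HOL-Library.Disjoint_Sets"
begin

text \<open>Finite joint pmf p u v on UU x VV (base-2 logs; note log 2 0 = 0 in Isabelle,
so the convention 0 log 0 = 0 holds automatically).\<close>

definition is_joint_pmf :: "'a set \<Rightarrow> 'b set \<Rightarrow> ('a \<Rightarrow> 'b \<Rightarrow> real) \<Rightarrow> bool" where
  "is_joint_pmf UU VV p \<longleftrightarrow> finite UU \<and> finite VV \<and>
     (\<forall>u\<in>UU. \<forall>v\<in>VV. 0 \<le> p u v) \<and> (\<Sum>u\<in>UU. \<Sum>v\<in>VV. p u v) = 1"

definition margU :: "'b set \<Rightarrow> ('a \<Rightarrow> 'b \<Rightarrow> real) \<Rightarrow> 'a \<Rightarrow> real" where
  "margU VV p u = (\<Sum>v\<in>VV. p u v)"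

definition margV :: "'a set \<Rightarrow> ('a \<Rightarrow> 'b \<Rightarrow> real) \<Rightarrow> 'b \<Rightarrow> real" where
  "margV UU p v = (\<Sum>u\<in>UU. p u v)"

definition entU :: "'a set \<Rightarrow> 'b set \<Rightarrow> ('a \<Rightarrow> 'b \<Rightarrow> real) \<Rightarrow> real" where
  "entU UU VV p = - (\<Sum>u\<in>UU. margU VV p u * log 2 (margU VV p u))"

definition entV :: "'a set \<Rightarrow> 'b set \<Rightarrow> ('a \<Rightarrow> 'b \<Rightarrow> real) \<Rightarrow> real" where
  "entV UU VV p = - (\<Sum>v\<in>VV. margV UU p v * log 2 (margV UU p v))"

definition entUV :: "'a set \<Rightarrow> 'b set \<Rightarrow> ('a \<Rightarrow> 'b \<Rightarrow> real) \<Rightarrow> real" where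
  "entUV UU VV p = - (\<Sum>u\<in>UU. \<Sum>v\<in>VV. p u v * log 2 (p u v))"

definition condentVU :: "'a set \<Rightarrow> 'b set \<Rightarrow> ('a \<Rightarrow> 'b \<Rightarrow> real) \<Rightarrow> real" where
  "condentVU UU VV p = - (\<Sum>u\<in>{u\<in>UU. margU VV p u > 0}. \<Sum>v\<in>VV.
      p u v * log 2 (p u v / margU VV p u))"

definition mutinf :: "'a set \<Rightarrow> 'b set \<Rightarrow> ('a \<Rightarrow> 'b \<Rightarrow> real) \<Rightarrow> real" where
  "mutinf UU VV p = entU UU VV p + entV UU VV p - entUV UU VV p"

definition sem_entU :: "'a set set \<Rightarrow> 'b set \<Rightarrow> ('a \<Rightarrow> 'b \<Rightarrow> real) \<Rightarrow> real" where
  "sem_entU PU VV p = - (\<Sum>B\<in>PU. (\<Sum>u\<in>B. margU VV p u) * log 2 (\<Sum>u\<in>B. margU VV p u))"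

definition sem_entV :: "'a set \<Rightarrow> 'b set set \<Rightarrow> ('a \<Rightarrow> 'b \<Rightarrow> real) \<Rightarrow> real" where
  "sem_entV UU PV p = - (\<Sum>C\<in>PV. (\<Sum>v\<in>C. margV UU p v) * log 2 (\<Sum>v\<in>C. margV UU p v))"

definition sem_entUV :: "'a set set \<Rightarrow> 'b set set \<Rightarrow> ('a \<Rightarrow> 'b \<Rightarrow> real) \<Rightarrow> real" where
  "sem_entUV PU PV p = - (\<Sum>(B, C)\<in>PU \<times> PV.
      (\<Sum>(u, v)\<in>B \<times> C. p u v) * log 2 (\<Sum>(u, v)\<in>B \<times> C. p u v))"

definition sem_condentVU :: "'a set \<Rightarrow> 'b set \<Rightarrow> 'b set set \<Rightarrow> ('a \<Rightarrow> 'b \<Rightarrow> real) \<Rightarrow> real" where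
  "sem_condentVU UU VV PV p = - (\<Sum>u\<in>{u\<in>UU. margU VV p u > 0}. \<Sum>C\<in>PV.
      margU VV p u * ((\<Sum>v\<in>C. p u v) / margU VV p u)
        * log 2 ((\<Sum>v\<in>C. p u v) / margU VV p u))"

definition up_sem_mi :: "'a set \<Rightarrow> 'b set \<Rightarrow> 'a set set \<Rightarrow> 'b set set \<Rightarrow> ('a \<Rightarrow> 'b \<Rightarrow> real) \<Rightarrow> real" where
  "up_sem_mi UU VV PU PV p = entU UU VV p + entV UU VV p - sem_entUV PU PV p"

definition down_sem_mi :: "'a set \<Rightarrow> 'b set \<Rightarrow> 'a set set \<Rightarrow> 'b set set \<Rightarrow> ('a \<Rightarrow> 'b \<Rightarrow> real) \<Rightarrow> real" where
  "down_sem_mi UU VV PU PV p = sem_entU PU VV p + sem_entV UU PV p - entUV UU VV p"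

end

theory Submission
  imports Defs
begin

lemma coarse:
  fixes f :: "'c \<Rightarrow> real"
  assumes fin: "finite A" and P: "partition_on A P" and nn: "\<And>a. a \<in> A \<Longrightarrow> 0 \<le> f a"
  shows "(\<Sum>a\<in>A. f a * log 2 (f a)) \<le> (\<Sum>B\<in>P. (\<Sum>a\<in>B. f a) * log 2 (\<Sum>a\<in>B. f a))"
proof -
  have "(\<Sum>a\<in>A. f a * log 2 (f a)) = (\<Sum>B\<in>P. \<Sum>a\<in>B. f a * log 2 (f a))"
    using sum.partition[OF fin P] .
  also have "\<dots> \<le> (\<Sum>B\<in>P. (\<Sum>a\<in>B. f a) * log 2 (\<Sum>a\<in>B. f a))"
  proof (rule sum_mono)
    fix B assume B: "B \<in> P"
    have BA: "B \<subseteq> A" using B P by (auto simp: partition_on_def)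
    have finB: "finite B" using BA fin finite_subset by auto
    have "(\<Sum>a\<in>B. f a * log 2 (f a)) \<le> (\<Sum>a\<in>B. f a * log 2 (\<Sum>a\<in>B. f a))"
    proof (rule sum_mono)
      fix a assume a: "a \<in> B"
      have fa: "0 \<le> f a" using a BA nn by auto
      have le: "f a \<le> (\<Sum>a\<in>B. f a)"
        by (rule member_le_sum[OF a _ finB]) (use BA nn in auto)
      show "f a * log 2 (f a) \<le> f a * log 2 (\<Sum>a\<in>B. f a)"
      proof (cases "f a = 0")
        case True then show ?thesis by simp
      next
        case False
        then have "0 < f a" using fa by auto
        then have "log 2 (f a) \<le> log 2 (\<Sum>a\<in>B. f a)" using le by simp
        then show ?thesis using fa by (simp add: mult_left_mono)
      qed
    qed
    also have "\<dots> = (\<Sum>a\<in>B. f a) * log 2 (\<Sum>a\<in>B. f a)"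
      by (simp add: sum_distrib_right)
    finally show "(\<Sum>a\<in>B. f a * log 2 (f a)) \<le> (\<Sum>a\<in>B. f a) * log 2 (\<Sum>a\<in>B. f a)" .
  qed
  finally show ?thesis .
qed

lemma chain:
  fixes g :: "'a \<Rightarrow> 'c \<Rightarrow> real"
  assumes finU: "finite UU" and finI: "finite I"
    and nn: "\<And>u i. u \<in> UU \<Longrightarrow> i \<in> I \<Longrightarrow> 0 \<le> g u i"
  shows "(\<Sum>u\<in>UU. \<Sum>i\<in>I. g u i * log 2 (g u i)) =
     (\<Sum>u\<in>UU. (\<Sum>i\<in>I. g u i) * log 2 (\<Sum>i\<in>I. g u i)) +
     (\<Sum>u\<in>{u\<in>UU. (\<Sum>i\<in>I. g u i) > 0}. \<Sum>i\<in>I. g u i * log 2 (g u i / (\<Sum>i\<in>I. g u i)))"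
proof -
  define m where "m u = (\<Sum>i\<in>I. g u i)" for u
  have m0: "0 \<le> m u" if "u \<in> UU" for u unfolding m_def using nn that by (simp add: sum_nonneg)
  have pt: "(\<Sum>i\<in>I. g u i * log 2 (g u i)) = m u * log 2 (m u) +
      (if m u > 0 then (\<Sum>i\<in>I. g u i * log 2 (g u i / m u)) else 0)" if u: "u \<in> UU" for u
  proof (cases "m u > 0")
    case False
    then have "m u = 0" using m0 u by force
    then have "\<forall>i\<in>I. g u i = 0" unfolding m_def using sum_nonneg_eq_0_iff[OF finI] nn u by auto
    then show ?thesis using False \<open>m u = 0\<close> by simp
  next
    case True
    have "(\<Sum>i\<in>I. g u i * log 2 (g u i / m u)) = (\<Sum>i\<in>I. g u i * log 2 (g u i) - g u i * log 2 (m u))"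
    proof (rule sum.cong[OF refl])
      fix i assume i: "i \<in> I"
      show "g u i * log 2 (g u i / m u) = g u i * log 2 (g u i) - g u i * log 2 (m u)"
      proof (cases "g u i = 0")
        case False
        then have "g u i > 0" using nn[OF u i] by auto
        then show ?thesis using True by (simp add: log_divide right_diff_distrib)
      qed simp
    qed
    also have "\<dots> = (\<Sum>i\<in>I. g u i * log 2 (g u i)) - m u * log 2 (m u)"
      by (simp add: sum_subtractf m_def sum_distrib_right)
    finally show ?thesis using True by simp
  qed
  have "(\<Sum>u\<in>UU. \<Sum>i\<in>I. g u i * log 2 (g u i)) = (\<Sum>u\<in>UU. m u * log 2 (m u) +
      (if m u > 0 then (\<Sum>i\<in>I. g u i * log 2 (g u i / m u)) else 0))"
    using pt by (rule sum.cong[OF refl])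
  also have "\<dots> = (\<Sum>u\<in>UU. m u * log 2 (m u)) + (\<Sum>u\<in>{u\<in>UU. m u > 0}. \<Sum>i\<in>I. g u i * log 2 (g u i / m u))"
    by (simp add: sum.distrib sum.inter_filter[OF finU])
  finally show ?thesis unfolding m_def .
qed

theorem theorem2:
  fixes UU :: "'a set" and VV :: "'b set" and p :: "'a \<Rightarrow> 'b \<Rightarrow> real"
    and PU :: "'a set set" and PV :: "'b set set"
  assumes "is_joint_pmf UU VV p"
    and "partition_on UU PU" and "partition_on VV PV"
  shows "down_sem_mi UU VV PU PV p \<le> sem_entV UU PV p - condentVU UU VV p
       \<and> sem_entV UU PV p - condentVU UU VV p \<le> mutinf UU VV p
       \<and> mutinf UU VV p \<le> entV UU VV p - sem_condentVU UU VV PV p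
       \<and> entV UU VV p - sem_condentVU UU VV PV p \<le> up_sem_mi UU VV PU PV p"
proof -
  note PU = assms(2) and PV = assms(3)
  have finU: "finite UU" and finV: "finite VV" and nn: "\<And>u v. u \<in> UU \<Longrightarrow> v \<in> VV \<Longrightarrow> 0 \<le> p u v"
    using assms(1) by (auto simp: is_joint_pmf_def)
  define pu where "pu u = margU VV p u" for u
  have pu0: "0 \<le> pu u" if "u \<in> UU" for u
    unfolding pu_def margU_def using nn that by (simp add: sum_nonneg)
  have pv0: "0 \<le> margV UU p v" if "v \<in> VV" for v
    unfolding margV_def using nn that by (simp add: sum_nonneg)
  have finPV: "finite PV" using finite_elements[OF finV PV] .
  have PVsub: "C \<subseteq> VV" if "C \<in> PV" for C using PV that by (auto simp: partition_on_def)
  have PUsub: "B \<subseteq> UU" if "B \<in> PU" for B using PU that by (auto simp: partition_on_def)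
  have ch1: "entUV UU VV p = entU UU VV p + condentVU UU VV p"
    using chain[of UU VV p, OF finU finV nn]
    unfolding entUV_def entU_def condentVU_def margU_def by simp
  have sU: "sem_entU PU VV p \<le> entU UU VV p"
    using coarse[OF finU PU, of "margU VV p"] pu0 unfolding sem_entU_def entU_def pu_def by simp
  have sV: "sem_entV UU PV p \<le> entV UU VV p"
    using coarse[OF finV PV, of "margV UU p"] pv0 unfolding sem_entV_def entV_def by simp
  have sC: "sem_condentVU UU VV PV p \<le> condentVU UU VV p"
  proof -
    have "(\<Sum>u\<in>{u\<in>UU. margU VV p u > 0}. \<Sum>v\<in>VV. p u v * log 2 (p u v / margU VV p u))
       \<le> (\<Sum>u\<in>{u\<in>UU. margU VV p u > 0}. \<Sum>C\<in>PV.
      margU VV p u * ((\<Sum>v\<in>C. p u v) / margU VV p u) * log 2 ((\<Sum>v\<in>C. p u v) / margU VV p u))"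
    proof (rule sum_mono)
      fix u assume u: "u \<in> {u\<in>UU. margU VV p u > 0}"
      define m where "m = margU VV p u"
      have m: "m > 0" using u m_def by auto
      have c: "(\<Sum>v\<in>VV. p u v / m * log 2 (p u v / m)) \<le>
          (\<Sum>C\<in>PV. (\<Sum>v\<in>C. p u v / m) * log 2 (\<Sum>v\<in>C. p u v / m))"
        by (rule coarse[OF finV PV]) (use nn u m in auto)
      have "(\<Sum>v\<in>VV. p u v * log 2 (p u v / m)) = m * (\<Sum>v\<in>VV. p u v / m * log 2 (p u v / m))"
        using m by (simp add: sum_distrib_left)
      also have "\<dots> \<le> m * (\<Sum>C\<in>PV. (\<Sum>v\<in>C. p u v / m) * log 2 (\<Sum>v\<in>C. p u v / m))"
        using c m by simp
      also have "\<dots> = (\<Sum>C\<in>PV. m * ((\<Sum>v\<in>C. p u v) / m) * log 2 ((\<Sum>v\<in>C. p u v) / m))"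
      proof -
        have "(\<Sum>v\<in>C. p u v / m) = (\<Sum>v\<in>C. p u v) / m" for C
          by (simp add: sum_divide_distrib)
        then have "m * (\<Sum>C\<in>PV. (\<Sum>v\<in>C. p u v / m) * log 2 (\<Sum>v\<in>C. p u v / m))
            = m * (\<Sum>C\<in>PV. ((\<Sum>v\<in>C. p u v) / m) * log 2 ((\<Sum>v\<in>C. p u v) / m))" by simp
        also have "\<dots> = (\<Sum>C\<in>PV. m * (((\<Sum>v\<in>C. p u v) / m) * log 2 ((\<Sum>v\<in>C. p u v) / m)))"
          by (rule sum_distrib_left)
        finally show ?thesis by (simp only: mult.assoc)
      qed
      finally show "(\<Sum>v\<in>VV. p u v * log 2 (p u v / margU VV p u)) \<le> (\<Sum>C\<in>PV.
      margU VV p u * ((\<Sum>v\<in>C. p u v) / margU VV p u) * log 2 ((\<Sum>v\<in>C. p u v) / margU VV p u))"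
        unfolding m_def .
    qed
    then show ?thesis unfolding sem_condentVU_def condentVU_def by simp
  qed
  have sJ: "sem_entUV PU PV p \<le> entU UU VV p + sem_condentVU UU VV PV p"
  proof -
    define q where "q u C = (\<Sum>v\<in>C. p u v)" for u C
    have q0: "0 \<le> q u C" if "u \<in> UU" "C \<in> PV" for u C
      unfolding q_def using nn that PVsub by (force intro: sum_nonneg)
    have qsum: "(\<Sum>C\<in>PV. q u C) = pu u" for u
      unfolding q_def pu_def margU_def using sum.partition[OF finV PV, of "p u"] by simp
    note ch2 = chain[of UU PV q, OF finU finPV q0]
    have eq1: "(\<Sum>u\<in>UU. \<Sum>C\<in>PV. q u C * log 2 (q u C)) = - entU UU VV p - sem_condentVU UU VV PV p"
    proof -
      have "(\<Sum>u\<in>{u\<in>UU. pu u > 0}. \<Sum>C\<in>PV. q u C * log 2 (q u C / pu u)) =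
         (\<Sum>u\<in>{u\<in>UU. pu u > 0}. \<Sum>C\<in>PV. pu u * (q u C / pu u) * log 2 (q u C / pu u))"
        by (rule sum.cong[OF refl], rule sum.cong[OF refl]) auto
      then show ?thesis using ch2 unfolding qsum entU_def sem_condentVU_def
        by (simp add: pu_def q_def)
    qed
    have eq2: "sem_entUV PU PV p = - (\<Sum>C\<in>PV. \<Sum>B\<in>PU. (\<Sum>u\<in>B. q u C) * log 2 (\<Sum>u\<in>B. q u C))"
    proof -
      have "(\<Sum>u\<in>B. q u C) = (\<Sum>(u, v)\<in>B \<times> C. p u v)" for B C
        unfolding q_def by (rule sum.cartesian_product)
      then show ?thesis unfolding sem_entUV_def
        by (simp add: sum.cartesian_product[symmetric] sum.swap[of _ PV PU])
    qed
    have "(\<Sum>C\<in>PV. \<Sum>u\<in>UU. q u C * log 2 (q u C)) \<le>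
          (\<Sum>C\<in>PV. \<Sum>B\<in>PU. (\<Sum>u\<in>B. q u C) * log 2 (\<Sum>u\<in>B. q u C))"
      by (rule sum_mono, rule coarse[OF finU PU]) (use q0 in auto)
    then show ?thesis using eq1 eq2 by (simp add: sum.swap[of _ PV UU])
  qed
  show ?thesis using ch1 sU sV sC sJ
    unfolding down_sem_mi_def mutinf_def up_sem_mi_def by linarith
qed

end
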